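(* Let $\alpha\in(0,1)$, $\epsilon>0$, $b>0$, fix a prior $\rho$ and secrets $s_i,s_j$, and let $\pi$ be a coupling of $P_{X|s_i,\rho}$ and $P_{X|s_j,\rho}$. Let $Y=X+N$ with $N\sim\mathrm{Lap}(b)$ (density $\frac{1}{2b}e^{-|z|/b}$) independent of $(X,S)$. If $$\int e^{-\alpha\frac{|x-x'|}{b}}\,\mathrm{d}\pi(x,x')\ \ge\ e^{(\alpha-1)\epsilon},$$ then $D_\alpha(P_{Y|s_i,\rho}\,\|\,P_{Y|s_j,\rho})\le\epsilon$.
   Context: Setting: a sensitive secret $S$ and real-valued data $X$; for each secret value $s$ and prior belief $\rho$, $X$ given $S=s$ has a density $P_{X|s,\rho}$ on $\mathbb{R}$. The released data $Y=X+N$ has conditional density $P_{Y|S}(y|s,\rho)=\int P_N(y-x)P_{X|S}(x|s,\rho)\,\mathrm{d}x$. For densities $P,Q$ the Rényi divergence of order $\alpha\in(0,1)$ is $D_\alpha(P\|Q)=\frac{1}{\alpha-1}\log\int P(y)^\alpha Q(y)^{1-\alpha}\,\mathrm{d}y$. A coupling of two distributions on $\mathbb{R}$ is a joint distribution on $\mathbb{R}^2$ having them as marginals. *)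

theory Defs
  imports "HOL-Probability.Probability"
begin

definition is_density :: "(real \<Rightarrow> real) \<Rightarrow> bool" where
  "is_density f \<longleftrightarrow> f \<in> borel_measurable lborel \<and> (\<forall>x. 0 \<le> f x)
     \<and> (\<integral>\<^sup>+ x. ennreal (f x) \<partial>lborel) = 1"

definition lap_density :: "real \<Rightarrow> real \<Rightarrow> real" where
  "lap_density b z = exp (- \<bar>z\<bar> / b) / (2 * b)"

text \<open>Density of Y = X + N given S = s and prior rho, N ~ Lap(b) independent.\<close>
definition PY :: "real \<Rightarrow> ('s \<Rightarrow> 'r \<Rightarrow> real \<Rightarrow> real) \<Rightarrow> 's \<Rightarrow> 'r \<Rightarrow> real \<Rightarrow> real" where
  "PY b PX s \<rho> y = (\<integral> x. lap_density b (y - x) * PX s \<rho> x \<partial>lborel)"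

definition renyi_div :: "real \<Rightarrow> (real \<Rightarrow> real) \<Rightarrow> (real \<Rightarrow> real) \<Rightarrow> real" where
  "renyi_div \<alpha> P Q = 1 / (\<alpha> - 1) * ln (\<integral> y. P y powr \<alpha> * Q y powr (1 - \<alpha>) \<partial>lborel)"

definition is_coupling :: "(real \<times> real) measure \<Rightarrow> (real \<Rightarrow> real) \<Rightarrow> (real \<Rightarrow> real) \<Rightarrow> bool" where
  "is_coupling \<pi> f g \<longleftrightarrow> prob_space \<pi> \<and> sets \<pi> = sets borel
     \<and> distr \<pi> lborel fst = density lborel f \<and> distr \<pi> lborel snd = density lborel g"

end

theory Submission
  imports Defs
begin

lemma lap_int0:
  assumes b: "0 < b"
  shows "(\<integral>\<^sup>+ y. ennreal (lap_density b y) \<partial>lborel) = 1"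
proof -
  let ?E = "exponential_density (1/b)"
  define h where "h = (1/2::real)"
  have E1: "(\<integral>\<^sup>+ y. ennreal (?E y) \<partial>lborel) = 1"
    using nn_integral_erlang_ith_moment[of "1/b" 0 0] b
    by (simp only: power_0 mult_1_right add_0 fact_0 of_nat_1 div_by_1 zero_less_divide_1_iff ennreal_1)
  have E2: "(\<integral>\<^sup>+ y. ennreal (?E (-y)) \<partial>lborel) = 1"
  proof -
    have "(\<integral>\<^sup>+ y. ennreal (?E y) \<partial>lborel) = ennreal \<bar>-1::real\<bar> * (\<integral>\<^sup>+ y. ennreal (?E (0 + (-1) * y)) \<partial>lborel)"
      by (rule nn_integral_real_affine) (rule measurable_compose[OF borel_measurable_erlang_density measurable_ennreal], simp)
    then show ?thesis using E1 by simp
  qed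
  have "(\<integral>\<^sup>+ y. ennreal (lap_density b y) \<partial>lborel)
      = (\<integral>\<^sup>+ y. ennreal (?E y) * ennreal h + ennreal (?E (-y)) * ennreal h \<partial>lborel)"
  proof (rule nn_integral_cong_AE)
    show "AE y in lborel. ennreal (lap_density b y) = ennreal (?E y) * ennreal h + ennreal (?E (-y)) * ennreal h"
      using AE_lborel_singleton[of 0]
    proof eventually_elim
      case (elim y)
      have "lap_density b y = ?E y * h + ?E (-y) * h"
        using elim b by (auto simp: lap_density_def exponential_density_def h_def)
      moreover have "0 \<le> ?E y" "0 \<le> ?E (-y)" "0 \<le> h" using b by (auto simp: h_def)
      ultimately have "ennreal (lap_density b y) = ennreal (?E y * h) + ennreal (?E (-y) * h)"
        by (simp add: ennreal_plus)
      then show ?case using \<open>0 \<le> h\<close> b by (simp add: ennreal_mult)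
    qed
  qed
  also have "\<dots> = (\<integral>\<^sup>+ y. ennreal (?E y) \<partial>lborel) * ennreal h + (\<integral>\<^sup>+ y. ennreal (?E (-y)) \<partial>lborel) * ennreal h"
    by (subst nn_integral_add) (auto simp: nn_integral_multc)
  also have "\<dots> = 1"
  proof -
    have "ennreal h + ennreal h = ennreal (h + h)" by (rule ennreal_plus[symmetric]) (auto simp: h_def)
    then show ?thesis by (simp add: E1 E2 h_def)
  qed
  finally show ?thesis .
qed

lemma lap_int:
  assumes b: "0 < b"
  shows "(\<integral>\<^sup>+ y. ennreal (lap_density b (y - c)) \<partial>lborel) = 1"
proof -
  have "(\<integral>\<^sup>+ y. ennreal (lap_density b (y - c)) \<partial>lborel) = ennreal \<bar>1::real\<bar> * (\<integral>\<^sup>+ y. ennreal (lap_density b ((c + 1 * y) - c)) \<partial>lborel)"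
    by (rule nn_integral_real_affine) (auto simp: lap_density_def)
  then show ?thesis using lap_int0[OF b] by simp
qed

lemma fst_meas: assumes "sets \<pi> = sets (borel :: (real \<times> real) measure)" shows "fst \<in> borel_measurable \<pi>"
proof -
  have "continuous_on UNIV (fst :: real \<times> real \<Rightarrow> real)" by (intro continuous_intros)
  then have "(fst :: real \<times> real \<Rightarrow> real) \<in> borel_measurable borel" by (rule borel_measurable_continuous_onI)
  then show ?thesis unfolding measurable_cong_sets[OF assms refl] .
qed
lemma snd_meas: assumes "sets \<pi> = sets (borel :: (real \<times> real) measure)" shows "snd \<in> borel_measurable \<pi>"
proof -
  have "continuous_on UNIV (snd :: real \<times> real \<Rightarrow> real)" by (intro continuous_intros)
  then have "(snd :: real \<times> real \<Rightarrow> real) \<in> borel_measurable borel" by (rule borel_measurable_continuous_onI)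
  then show ?thesis unfolding measurable_cong_sets[OF assms refl] .
qed

lemma lap_pos: "0 < b \<Longrightarrow> 0 < lap_density b t"
  by (simp add: lap_density_def)
lemma lap_nn: "0 < b \<Longrightarrow> 0 \<le> lap_density b t"
  by (simp add: lap_density_def)
lemma lap_le: "0 < b \<Longrightarrow> lap_density b t \<le> 1 / (2*b)"
  by (simp add: lap_density_def divide_right_mono)
lemma lap_meas[measurable]: "lap_density b \<in> borel_measurable borel"
  unfolding lap_density_def by measurable

lemma PY_repr:
  assumes P: "prob_space \<pi>" and T[measurable]: "T \<in> borel_measurable \<pi>"
    and D: "distr \<pi> lborel T = density lborel p" and p[measurable]: "p \<in> borel_measurable borel"
    and pn: "\<And>x. 0 \<le> p x" and b: "0 < b"
  shows "(\<integral>x. lap_density b (y - x) * p x \<partial>lborel) = (\<integral>z. lap_density b (y - T z) \<partial>\<pi>)"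
    "ennreal (\<integral>x. lap_density b (y - x) * p x \<partial>lborel) = (\<integral>\<^sup>+z. ennreal (lap_density b (y - T z)) \<partial>\<pi>)"
    "0 < (\<integral>x. lap_density b (y - x) * p x \<partial>lborel)"
proof -
  interpret P: prob_space \<pi> by (rule P)
  define N where "N = (\<integral>\<^sup>+z. ennreal (lap_density b (y - T z)) \<partial>\<pi>)"
  have "(\<integral>\<^sup>+x. ennreal (lap_density b (y - x) * p x) \<partial>lborel) = (\<integral>\<^sup>+x. ennreal (p x) * ennreal (lap_density b (y - x)) \<partial>lborel)"
    using pn lap_pos[OF b] by (intro nn_integral_cong) (simp add: ennreal_mult' mult.commute less_imp_le)
  also have "\<dots> = (\<integral>\<^sup>+x. ennreal (lap_density b (y - x)) \<partial>density lborel p)"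
    by (subst nn_integral_density) auto
  also have "\<dots> = (\<integral>\<^sup>+x. ennreal (lap_density b (y - x)) \<partial>distr \<pi> lborel T)"
    by (simp add: D)
  also have "\<dots> = N"
    unfolding N_def by (subst nn_integral_distr) auto
  finally have eq1: "(\<integral>\<^sup>+x. ennreal (lap_density b (y - x) * p x) \<partial>lborel) = N" .
  have "N \<le> (\<integral>\<^sup>+z. ennreal (1/(2*b)) \<partial>\<pi>)"
    unfolding N_def using lap_le[OF b] by (intro nn_integral_mono) (simp add: ennreal_leI)
  also have "\<dots> = ennreal (1/(2*b))" by (simp add: P.emeasure_space_1)
  finally have Nfin: "N < top" using le_less_trans by fastforce
  have "N \<noteq> 0"
  proof
    assume "N = 0"
    then have "AE z in \<pi>. ennreal (lap_density b (y - T z)) = 0"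
      unfolding N_def by (subst (asm) nn_integral_0_iff_AE) auto
    moreover have "\<And>z. ennreal (lap_density b (y - T z)) \<noteq> 0"
      using lap_pos[OF b] by (simp add: ennreal_eq_0_iff not_le)
    ultimately have "AE z in \<pi>. False" by (auto elim: eventually_mono)
    then show False by (simp add: P.AE_False)
  qed
  have i1: "(\<integral>x. lap_density b (y - x) * p x \<partial>lborel) = enn2real N"
    using eq1 pn lap_pos[OF b] by (subst integral_eq_nn_integral) (auto intro!: AE_I2 mult_nonneg_nonneg lap_nn[OF b])
  have i2: "(\<integral>z. lap_density b (y - T z) \<partial>\<pi>) = enn2real N"
    unfolding N_def using lap_pos[OF b] by (subst integral_eq_nn_integral) (auto intro: less_imp_le)
  show "(\<integral>x. lap_density b (y - x) * p x \<partial>lborel) = (\<integral>z. lap_density b (y - T z) \<partial>\<pi>)"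
    using i1 i2 by simp
  show "ennreal (\<integral>x. lap_density b (y - x) * p x \<partial>lborel) = (\<integral>\<^sup>+z. ennreal (lap_density b (y - T z)) \<partial>\<pi>)"
    using i1 Nfin unfolding N_def by simp
  show "0 < (\<integral>x. lap_density b (y - x) * p x \<partial>lborel)"
    using i1 Nfin \<open>N \<noteq> 0\<close> by (simp add: enn2real_positive_iff zero_less_iff_neq_zero)
qed

lemma pw:
  assumes b: "0 < b" and a: "0 < \<alpha>" "\<alpha> < 1"
  shows "lap_density b (y - x') * exp (- \<alpha> * \<bar>x - x'\<bar> / b)
     \<le> lap_density b (y - x) powr \<alpha> * lap_density b (y - x') powr (1 - \<alpha>)"
proof -
  let ?u = "lap_density b (y - x)" and ?v = "lap_density b (y - x')"
  have "\<bar>y - x\<bar> \<le> \<bar>y - x'\<bar> + \<bar>x - x'\<bar>" by simp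
  then have "\<bar>y - x\<bar> / b \<le> (\<bar>y - x'\<bar> + \<bar>x - x'\<bar>) / b"
    using b by (simp add: divide_right_mono)
  then have "- \<bar>y - x\<bar> / b \<ge> - \<bar>y - x'\<bar> / b + - \<bar>x - x'\<bar> / b"
    by (simp add: add_divide_distrib)
  then have "exp (- \<bar>y - x\<bar> / b) \<ge> exp (- \<bar>y - x'\<bar> / b) * exp (- \<bar>x - x'\<bar> / b)"
    by (simp add: exp_add[symmetric])
  then have uv: "?u \<ge> ?v * exp (- \<bar>x - x'\<bar> / b)"
    using b unfolding lap_density_def by (simp add: divide_right_mono)
  have "(?v * exp (- \<bar>x - x'\<bar> / b)) powr \<alpha> \<le> ?u powr \<alpha>"
    using uv a lap_pos[OF b] by (intro powr_mono2) (auto intro: less_imp_le)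
  moreover have "(?v * exp (- \<bar>x - x'\<bar> / b)) powr \<alpha> = ?v powr \<alpha> * exp (- \<alpha> * \<bar>x - x'\<bar> / b)"
  proof -
    have "exp (- \<bar>x - x'\<bar> / b) powr \<alpha> = exp (- \<alpha> * \<bar>x - x'\<bar> / b)"
      by (simp add: powr_def)
    then show ?thesis using lap_pos[OF b] by (simp add: powr_mult less_imp_le)
  qed
  ultimately have "?v powr \<alpha> * exp (- \<alpha> * \<bar>x - x'\<bar> / b) * ?v powr (1 - \<alpha>) \<le> ?u powr \<alpha> * ?v powr (1 - \<alpha>)"
    by (simp add: mult_right_mono)
  moreover have "?v powr \<alpha> * ?v powr (1 - \<alpha>) = ?v"
    using lap_pos[OF b] by (simp add: powr_add[symmetric] abs_of_pos[OF lap_pos[OF b]])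
  ultimately show ?thesis by (metis mult.commute mult.left_commute)
qed


theorem proposition1:
  fixes \<alpha> \<epsilon> b :: real
    and PX :: "'s \<Rightarrow> 'r \<Rightarrow> real \<Rightarrow> real"
    and \<rho> :: 'r and s\<^sub>i s\<^sub>j :: 's
    and \<pi> :: "(real \<times> real) measure"
  assumes "0 < \<alpha>" "\<alpha> < 1" "0 < \<epsilon>" "0 < b"
    and "\<And>s r. is_density (PX s r)"
    and "is_coupling \<pi> (PX s\<^sub>i \<rho>) (PX s\<^sub>j \<rho>)"
    and "(\<integral> z. exp (- \<alpha> * \<bar>fst z - snd z\<bar> / b) \<partial>\<pi>) \<ge> exp ((\<alpha> - 1) * \<epsilon>)"
  shows "renyi_div \<alpha> (PY b PX s\<^sub>i \<rho>) (PY b PX s\<^sub>j \<rho>) \<le> \<epsilon>"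
proof -
  note a0 = assms(1) and a1 = assms(2) and b0 = assms(4) and hyp = assms(7)
  have Pr: "prob_space \<pi>" and sets\<pi>: "sets \<pi> = sets borel"
    and m1: "distr \<pi> lborel fst = density lborel (PX s\<^sub>i \<rho>)"
    and m2: "distr \<pi> lborel snd = density lborel (PX s\<^sub>j \<rho>)"
    using assms(6) unfolding is_coupling_def by auto
  interpret P: prob_space \<pi> by (rule Pr)
  interpret PS: pair_sigma_finite \<pi> lborel
    unfolding pair_sigma_finite_def
    by (simp add: prob_space_imp_sigma_finite[OF Pr] lborel.sigma_finite_measure_axioms)
  have PXm[measurable]: "\<And>s r. PX s r \<in> borel_measurable borel"
    using assms(5) unfolding is_density_def by auto
  have PXn: "\<And>s r x. 0 \<le> PX s r x"
    using assms(5) unfolding is_density_def by auto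
  have fm[measurable]: "fst \<in> borel_measurable \<pi>" using fst_meas[OF sets\<pi>] .
  have sm[measurable]: "snd \<in> borel_measurable \<pi>" using snd_meas[OF sets\<pi>] .
  define L where "L = lap_density b"
  define e where "e = (\<lambda>z::real\<times>real. exp (- \<alpha> * \<bar>fst z - snd z\<bar> / b))"
  define A where "A = PY b PX s\<^sub>i \<rho>"
  define B where "B = PY b PX s\<^sub>j \<rho>"
  have Lm[measurable]: "L \<in> borel_measurable borel" unfolding L_def by measurable
  have em[measurable]: "e \<in> borel_measurable \<pi>" unfolding e_def by measurable
  have Lpos: "\<And>t. 0 < L t" and Lnn: "\<And>t. 0 \<le> L t" and Lle: "\<And>t. L t \<le> 1/(2*b)"
    unfolding L_def using lap_pos[OF b0] lap_nn[OF b0] lap_le[OF b0] by auto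
  have Lint: "\<And>c. (\<integral>\<^sup>+ y. ennreal (L (y - c)) \<partial>lborel) = 1"
    unfolding L_def by (rule lap_int[OF b0])
  have Ar: "A y = (\<integral>z. L (y - fst z) \<partial>\<pi>)" "ennreal (A y) = (\<integral>\<^sup>+z. ennreal (L (y - fst z)) \<partial>\<pi>)" "0 < A y" for y
    unfolding A_def PY_def L_def using PY_repr[OF Pr fm m1 PXm PXn b0] by auto
  have Br: "B y = (\<integral>z. L (y - snd z) \<partial>\<pi>)" "ennreal (B y) = (\<integral>\<^sup>+z. ennreal (L (y - snd z)) \<partial>\<pi>)" "0 < B y" for y
    unfolding B_def PY_def L_def using PY_repr[OF Pr sm m2 PXm PXn b0] by auto
  have intf: "integrable \<pi> (\<lambda>z. L (y - fst z))" for y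
    using Lle Lnn by (intro P.integrable_const_bound[where B="1/(2*b)"]) auto
  have intg: "integrable \<pi> (\<lambda>z. L (y - snd z))" for y
    using Lle Lnn by (intro P.integrable_const_bound[where B="1/(2*b)"]) auto
  have inte: "integrable \<pi> e"
    by (intro P.integrable_const_bound[where B=1]) (auto simp: e_def intro!: mult_nonneg_nonneg divide_nonneg_pos b0 less_imp_le[OF a0])
  have e_le: "e z \<le> 1" and e_nn: "0 \<le> e z" for z
    unfolding e_def using a0 b0 by (auto simp: divide_nonneg_pos)
  have gele: "L (y - snd z) * e z \<le> 1/(2*b)" for y z
    using mult_left_le[OF e_le Lnn] Lle order.trans by blast
  have intge: "integrable \<pi> (\<lambda>z. L (y - snd z) * e z)" for y
    using gele Lnn e_nn by (intro P.integrable_const_bound[where B="1/(2*b)"]) auto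
  have step2: "(\<integral>z. L (y - snd z) * e z \<partial>\<pi>) \<le> A y powr \<alpha> * B y powr (1 - \<alpha>)" for y
  proof -
    define c where "c = A y powr \<alpha> * B y powr (1 - \<alpha>)"
    have Ap: "0 < A y" and Bp: "0 < B y" using Ar(3) Br(3) .
    have cp: "0 < c" unfolding c_def using Ap Bp by simp
    have pt: "L (y - snd z) * e z \<le> c * \<alpha> / A y * L (y - fst z) + c * (1 - \<alpha>) / B y * L (y - snd z)" for z
    proof -
      let ?u = "L (y - fst z)" and ?v = "L (y - snd z)"
      have "L (y - snd z) * e z \<le> ?u powr \<alpha> * ?v powr (1 - \<alpha>)"
        unfolding L_def e_def using pw[OF b0 a0 a1, of y "snd z" "fst z"] by simp
      also have "\<dots> = c * ((?u / A y) powr \<alpha> * (?v / B y) powr (1 - \<alpha>))"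
        unfolding c_def using Ap Bp Lpos by (simp add: powr_divide less_imp_le)
      also have "\<dots> \<le> c * (\<alpha> * (?u / A y) + (1 - \<alpha>) * (?v / B y))"
        using cp a0 a1 Ap Bp Lpos
        by (intro mult_left_mono Youngs_inequality_0) auto
      also have "\<dots> = c * \<alpha> / A y * ?u + c * (1 - \<alpha>) / B y * ?v"
        by (simp add: field_simps)
      finally show ?thesis .
    qed
    have "(\<integral>z. L (y - snd z) * e z \<partial>\<pi>) \<le> (\<integral>z. c * \<alpha> / A y * L (y - fst z) + c * (1 - \<alpha>) / B y * L (y - snd z) \<partial>\<pi>)"
      using pt intge intf intg by (intro integral_mono) auto
    also have "\<dots> = c * \<alpha> / A y * A y + c * (1 - \<alpha>) / B y * B y"
      using intf intg by (simp add: Ar(1)[of y] Br(1)[of y])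
    also have "\<dots> = c" using Ap Bp by (simp add: field_simps)
    finally show ?thesis unfolding c_def .
  qed
  have Am[measurable]: "A \<in> borel_measurable borel"
    unfolding A_def PY_def by measurable
  have Bm[measurable]: "B \<in> borel_measurable borel"
    unfolding B_def PY_def by measurable
  define J where "J = (\<integral>\<^sup>+ y. ennreal (A y powr \<alpha> * B y powr (1 - \<alpha>)) \<partial>lborel)"
  have I: "(\<integral>y. A y powr \<alpha> * B y powr (1 - \<alpha>) \<partial>lborel) = enn2real J"
    unfolding J_def by (subst integral_eq_nn_integral) auto
  have int1: "(\<integral>\<^sup>+ y. ennreal (A y) \<partial>lborel) = 1"
  proof -
    have "(\<integral>\<^sup>+ y. ennreal (A y) \<partial>lborel) = (\<integral>\<^sup>+ y. (\<integral>\<^sup>+z. ennreal (L (y - fst z)) \<partial>\<pi>) \<partial>lborel)"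
      by (simp add: Ar(2))
    also have "\<dots> = (\<integral>\<^sup>+ z. (\<integral>\<^sup>+y. ennreal (L (y - fst z)) \<partial>lborel) \<partial>\<pi>)"
      by (rule PS.Fubini') measurable
    also have "\<dots> = 1" by (simp add: Lint P.emeasure_space_1)
    finally show ?thesis .
  qed
  have int2: "(\<integral>\<^sup>+ y. ennreal (B y) \<partial>lborel) = 1"
  proof -
    have "(\<integral>\<^sup>+ y. ennreal (B y) \<partial>lborel) = (\<integral>\<^sup>+ y. (\<integral>\<^sup>+z. ennreal (L (y - snd z)) \<partial>\<pi>) \<partial>lborel)"
      by (simp add: Br(2))
    also have "\<dots> = (\<integral>\<^sup>+ z. (\<integral>\<^sup>+y. ennreal (L (y - snd z)) \<partial>lborel) \<partial>\<pi>)"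
      by (rule PS.Fubini') measurable
    also have "\<dots> = 1" by (simp add: Lint P.emeasure_space_1)
    finally show ?thesis .
  qed
  have "J \<le> (\<integral>\<^sup>+ y. ennreal \<alpha> * ennreal (A y) + ennreal (1 - \<alpha>) * ennreal (B y) \<partial>lborel)"
    unfolding J_def
  proof (intro nn_integral_mono)
    fix y
    have "A y powr \<alpha> * B y powr (1 - \<alpha>) \<le> \<alpha> * A y + (1 - \<alpha>) * B y"
      using Ar(3) Br(3) a0 a1 by (intro Youngs_inequality_0) auto
    then have "ennreal (A y powr \<alpha> * B y powr (1 - \<alpha>)) \<le> ennreal (\<alpha> * A y + (1 - \<alpha>) * B y)"
      by (rule ennreal_leI)
    also have "\<dots> = ennreal \<alpha> * ennreal (A y) + ennreal (1 - \<alpha>) * ennreal (B y)"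
      using Ar(3)[of y] Br(3)[of y] a0 a1 by (simp add: ennreal_plus ennreal_mult)
    finally show "ennreal (A y powr \<alpha> * B y powr (1 - \<alpha>)) \<le> ennreal \<alpha> * ennreal (A y) + ennreal (1 - \<alpha>) * ennreal (B y)" .
  qed
  also have "\<dots> = ennreal \<alpha> * 1 + ennreal (1 - \<alpha>) * 1"
    by (subst nn_integral_add) (auto simp: nn_integral_cmult int1 int2)
  also have "\<dots> = ennreal (\<alpha> + (1 - \<alpha>))"
    using a0 a1 by (subst ennreal_plus) auto
  finally have Jfin: "J < top" using ennreal_less_top le_less_trans by blast
  have "ennreal (\<integral>z. e z \<partial>\<pi>) = (\<integral>\<^sup>+ z. ennreal (e z) \<partial>\<pi>)"
    using inte e_nn by (simp add: nn_integral_eq_integral)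
  also have "\<dots> = (\<integral>\<^sup>+ z. (\<integral>\<^sup>+y. ennreal (L (y - snd z) * e z) \<partial>lborel) \<partial>\<pi>)"
  proof (intro nn_integral_cong)
    fix z
    have "(\<integral>\<^sup>+y. ennreal (L (y - snd z) * e z) \<partial>lborel) = (\<integral>\<^sup>+y. ennreal (e z) * ennreal (L (y - snd z)) \<partial>lborel)"
      using e_nn Lnn by (simp add: ennreal_mult mult.commute)
    also have "\<dots> = ennreal (e z)" by (simp add: nn_integral_cmult Lint)
    finally show "ennreal (e z) = (\<integral>\<^sup>+y. ennreal (L (y - snd z) * e z) \<partial>lborel)" by simp
  qed
  also have "\<dots> = (\<integral>\<^sup>+ y. (\<integral>\<^sup>+z. ennreal (L (y - snd z) * e z) \<partial>\<pi>) \<partial>lborel)"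
    by (rule PS.Fubini'[symmetric]) (unfold e_def, measurable)
  also have "\<dots> = (\<integral>\<^sup>+ y. ennreal (\<integral>z. L (y - snd z) * e z \<partial>\<pi>) \<partial>lborel)"
    using intge Lnn e_nn by (intro nn_integral_cong) (simp add: nn_integral_eq_integral)
  also have "\<dots> \<le> J"
    unfolding J_def using step2 by (intro nn_integral_mono ennreal_leI) auto
  finally have eJ: "ennreal (\<integral>z. e z \<partial>\<pi>) \<le> J" .
  have "(\<integral>z. e z \<partial>\<pi>) \<le> enn2real J"
    using enn2real_mono[OF eJ Jfin] e_nn by simp
  then have Ige: "exp ((\<alpha> - 1) * \<epsilon>) \<le> (\<integral>y. A y powr \<alpha> * B y powr (1 - \<alpha>) \<partial>lborel)"
    using hyp unfolding I e_def by simp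
  define Iv where "Iv = (\<integral>y. A y powr \<alpha> * B y powr (1 - \<alpha>) \<partial>lborel)"
  have Ivp: "0 < Iv" using Ige unfolding Iv_def by (meson exp_gt_zero less_le_trans)
  have "(\<alpha> - 1) * \<epsilon> \<le> ln Iv" using Ige Ivp unfolding Iv_def by (simp add: ln_ge_iff)
  then have "ln Iv / (\<alpha> - 1) \<le> \<epsilon>" using a1 by (simp add: divide_le_eq mult.commute)
  then show ?thesis unfolding renyi_div_def Iv_def A_def B_def by simp
qed

end
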